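(* The form $(-,-)_R$ induces a $\mathbb Q$-bilinear form $(-,-)_{R,0}$ on $L(\infty)/v^{-1}L(\infty)$, $(x+v^{-1}L(\infty),y+v^{-1}L(\infty))_{R,0}=(x,y)_R+v^{-1}A$, and for all $x,y\in L(\infty)$ one has $(x,y)_{R,0}=(x,y)_{K,0}$.
   Context: $U^+$ is the positive part of the quantum group of a Cartan datum $(I,(-,-))$ over $\mathbb Q(v)$, generated by $E_i$; $v_i=v^{(i,i)/2}$, $a_{ij}=2(i,j)/(i,i)$; $f_i'(1)=0$, $f_i'(E_j)=\delta_{ij}$, $f_i'(E_jP)=v_i^{a_{ij}}E_jf_i'(P)+\delta_{ij}P$. $A=\mathbb Q[[v^{-1}]]\cap\mathbb Q(v)$. Kashiwara's pairing $(-,-)_K$: unique non-degenerate symmetric bilinear form with $(1,1)_K=1$, $(E_ix,y)_K=(x,f_i'(y))_K$; it satisfies $(L(\infty),L(\infty))_K\subseteq A$ and induces $(x,y)_{K,0}=(x,y)_K+v^{-1}A$ on $L(\infty)/v^{-1}L(\infty)$. Ringel's pairing $(-,-)_R$ on $U^+$ is induced (via the Ringel–Green identification of $U^+$ with the generic composition algebra of Hall algebras) by $(\langle u_\beta\rangle,\langle u_{\beta'}\rangle)_R=v^{(\beta,\beta)}|\mathrm{Aut}(V_\beta)|^{-1}\delta_{\beta\beta'}$, and satisfies $(1,1)_R=1$, $(E_ix,y)_R=(1-v_i^{-2})^{-1}(x,f_i'(y))_R$. $L(\infty)$ is the $A$-span of all $\tilde E_{i_1}\cdots\tilde E_{i_l}1$,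 with Kashiwara operators $\tilde E_i(E_i^{(n)}u)=E_i^{(n+1)}u$ for $u\in\ker f_i'$. *)

theory Defs
  imports Main "HOL-Computational_Algebra.Polynomial" "HOL-Computational_Algebra.Fraction_Field"
begin

type_synonym Qv = "rat poly fract"

definition vv :: Qv where "vv = Fract [:0, 1:] 1"

text \<open>A = Q[[v^-1]] \<inter> Q(v): rational functions regular at v = infinity.\<close>
definition Aring :: "Qv set" where
  "Aring = {f. \<exists>p q. q \<noteq> 0 \<and> f = Fract p q \<and> degree p \<le> degree q}"

definition vinvA :: "Qv set" where
  "vinvA = (\<lambda>a. inverse vv * a) ` Aring"

text \<open>Cartan datum: symmetric bilinear form on Z[I] given on the basis I (a finite type).\<close>
definition cartan_datum :: "('i::finite \<Rightarrow> 'i \<Rightarrow> int) \<Rightarrow> bool" where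
  "cartan_datum cd \<longleftrightarrow> (\<forall>i j. cd i j = cd j i) \<and> (\<forall>i. cd i i > 0 \<and> even (cd i i))
     \<and> (\<forall>i j. i \<noteq> j \<longrightarrow> cd i i dvd 2 * cd i j \<and> cd i j \<le> 0)"

definition vi :: "('i \<Rightarrow> 'i \<Rightarrow> int) \<Rightarrow> 'i \<Rightarrow> Qv" where
  "vi cd i = vv ^ nat (cd i i div 2)"

definition aij :: "('i \<Rightarrow> 'i \<Rightarrow> int) \<Rightarrow> 'i \<Rightarrow> 'i \<Rightarrow> int" where
  "aij cd i j = (2 * cd i j) div cd i i"

definition qint :: "('i \<Rightarrow> 'i \<Rightarrow> int) \<Rightarrow> 'i \<Rightarrow> nat \<Rightarrow> Qv" where
  "qint cd i n = (vi cd i ^ n - inverse (vi cd i) ^ n) / (vi cd i - inverse (vi cd i))"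

definition qfact :: "('i \<Rightarrow> 'i \<Rightarrow> int) \<Rightarrow> 'i \<Rightarrow> nat \<Rightarrow> Qv" where
  "qfact cd i n = (\<Prod>k\<in>{1..n}. qint cd i k)"

definition Ediv :: "('i \<Rightarrow> 'i \<Rightarrow> int) \<Rightarrow> ('i \<Rightarrow> 'u::ring_1) \<Rightarrow> (Qv \<Rightarrow> 'u \<Rightarrow> 'u) \<Rightarrow> 'i \<Rightarrow> nat \<Rightarrow> 'u" where
  "Ediv cd E sc i n = sc (inverse (qfact cd i n)) (E i ^ n)"

inductive_set gen_by :: "('i \<Rightarrow> 'u::ring_1) \<Rightarrow> (Qv \<Rightarrow> 'u \<Rightarrow> 'u) \<Rightarrow> 'u set"
  for E sc where
  one: "1 \<in> gen_by E sc"
| mulE: "x \<in> gen_by E sc \<Longrightarrow> E i * x \<in> gen_by E sc"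
| add: "x \<in> gen_by E sc \<Longrightarrow> y \<in> gen_by E sc \<Longrightarrow> x + y \<in> gen_by E sc"
| scale: "x \<in> gen_by E sc \<Longrightarrow> sc a x \<in> gen_by E sc"

definition sym_bilin :: "(Qv \<Rightarrow> 'u::ab_group_add \<Rightarrow> 'u) \<Rightarrow> ('u \<Rightarrow> 'u \<Rightarrow> Qv) \<Rightarrow> bool" where
  "sym_bilin sc B \<longleftrightarrow> (\<forall>x y z. B (x + y) z = B x z + B y z) \<and> (\<forall>a x z. B (sc a x) z = a * B x z)
     \<and> (\<forall>x y. B x y = B y x)"

definition kashE :: "('i \<Rightarrow> 'i \<Rightarrow> int) \<Rightarrow> ('i \<Rightarrow> 'u::ring_1) \<Rightarrow> (Qv \<Rightarrow> 'u \<Rightarrow> 'u) \<Rightarrow> ('i \<Rightarrow> 'u \<Rightarrow> 'u)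
     \<Rightarrow> 'i \<Rightarrow> 'u \<Rightarrow> 'u" where
  "kashE cd E sc fp i u = (THE w. \<exists>(N::nat) c. (\<forall>n<N. fp i (c n) = 0)
       \<and> u = (\<Sum>n<N. Ediv cd E sc i n * c n) \<and> w = (\<Sum>n<N. Ediv cd E sc i (Suc n) * c n))"

inductive_set kmon :: "('i \<Rightarrow> 'i \<Rightarrow> int) \<Rightarrow> ('i \<Rightarrow> 'u::ring_1) \<Rightarrow> (Qv \<Rightarrow> 'u \<Rightarrow> 'u) \<Rightarrow> ('i \<Rightarrow> 'u \<Rightarrow> 'u) \<Rightarrow> 'u set"
  for cd E sc fp where
  one: "1 \<in> kmon cd E sc fp"
| step: "m \<in> kmon cd E sc fp \<Longrightarrow> kashE cd E sc fp i m \<in> kmon cd E sc fp"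

inductive_set Linf :: "('i \<Rightarrow> 'i \<Rightarrow> int) \<Rightarrow> ('i \<Rightarrow> 'u::ring_1) \<Rightarrow> (Qv \<Rightarrow> 'u \<Rightarrow> 'u) \<Rightarrow> ('i \<Rightarrow> 'u \<Rightarrow> 'u) \<Rightarrow> 'u set"
  for cd E sc fp where
  zero: "0 \<in> Linf cd E sc fp"
| add: "x \<in> Linf cd E sc fp \<Longrightarrow> y \<in> Linf cd E sc fp \<Longrightarrow> x + y \<in> Linf cd E sc fp"
| smul: "a \<in> Aring \<Longrightarrow> m \<in> kmon cd E sc fp \<Longrightarrow> sc a m \<in> Linf cd E sc fp"

definition vinvL :: "('i \<Rightarrow> 'i \<Rightarrow> int) \<Rightarrow> ('i \<Rightarrow> 'u::ring_1) \<Rightarrow> (Qv \<Rightarrow> 'u \<Rightarrow> 'u) \<Rightarrow> ('i \<Rightarrow> 'u \<Rightarrow> 'u) \<Rightarrow> 'u set" where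
  "vinvL cd E sc fp = sc (inverse vv) ` Linf cd E sc fp"

end

theory Submission
  imports Defs
begin


lemma Fract_poly_eq: "Fract (p::rat poly) 1 = Fract q 1 \<longleftrightarrow> p = q"
  by (simp add: eq_fract)

lemma A_zero: "0 \<in> Aring"
  unfolding Aring_def by (rule CollectI, rule exI[of _ 0], rule exI[of _ 1]) (simp add: Zero_fract_def)

lemma A_one: "1 \<in> Aring"
  unfolding Aring_def by (rule CollectI, rule exI[of _ 1], rule exI[of _ 1]) (simp add: One_fract_def)

lemma A_add: assumes "a \<in> Aring" "b \<in> Aring" shows "a + b \<in> Aring"
proof -
  obtain p q where pq: "q \<noteq> 0" "a = Fract p q" "degree p \<le> degree q" using assms(1) unfolding Aring_def by blast
  obtain p' q' where pq': "q' \<noteq> 0" "b = Fract p' q'" "degree p' \<le> degree q'" using assms(2) unfolding Aring_def by blast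
  have "degree (p * q' + p' * q) \<le> degree (q * q')"
  proof -
    have "degree (p * q' + p' * q) \<le> max (degree (p*q')) (degree (p'*q))" by (rule degree_add_le_max)
    moreover have "degree (p*q') \<le> degree q + degree q'" using degree_mult_le[of p q'] pq by linarith
    moreover have "degree (p'*q) \<le> degree q + degree q'" using degree_mult_le[of p' q] pq' by linarith
    ultimately show ?thesis using degree_mult_eq[of q q'] pq pq' by simp
  qed
  thus ?thesis unfolding Aring_def using pq pq' by (intro CollectI exI[of _ "p * q' + p' * q"] exI[of _ "q*q'"]) simp
qed

lemma A_mult: assumes "a \<in> Aring" "b \<in> Aring" shows "a * b \<in> Aring"
proof -
  obtain p q where pq: "q \<noteq> 0" "a = Fract p q" "degree p \<le> degree q" using assms(1) unfolding Aring_def by blast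
  obtain p' q' where pq': "q' \<noteq> 0" "b = Fract p' q'" "degree p' \<le> degree q'" using assms(2) unfolding Aring_def by blast
  have "degree (p * p') \<le> degree (q * q')"
    using degree_mult_le[of p p'] degree_mult_eq[of q q'] pq pq' by simp
  thus ?thesis unfolding Aring_def using pq pq' by (intro CollectI exI[of _ "p * p'"] exI[of _ "q*q'"]) simp
qed

lemma A_uminus: assumes "a \<in> Aring" shows "- a \<in> Aring"
proof -
  obtain p q where pq: "q \<noteq> 0" "a = Fract p q" "degree p \<le> degree q" using assms(1) unfolding Aring_def by blast
  thus ?thesis unfolding Aring_def by (intro CollectI exI[of _ "- p"] exI[of _ "q"]) simp
qed

lemma A_diff: "a \<in> Aring \<Longrightarrow> b \<in> Aring \<Longrightarrow> a - b \<in> Aring"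
  using A_add[of a "-b"] A_uminus[of b] by simp

lemma vv_ne0: "vv \<noteq> 0"
  unfolding vv_def by (simp add: Zero_fract_def eq_fract)

lemma vv_pow: "vv ^ m = Fract (monom 1 m) 1"
proof (induction m)
  case 0 then show ?case by (simp add: One_fract_def monom_0 one_pCons)
next
  case (Suc m) then show ?case by (simp add: vv_def monom_Suc pcompose_pCons)
qed

lemma vv_pow_ne1: "m > 0 \<Longrightarrow> vv ^ m \<noteq> 1"
  unfolding vv_pow One_fract_def Fract_poly_eq
  by (metis degree_1 degree_monom_eq one_neq_zero not_gr0)

lemma vinv_A: "inverse vv \<in> Aring"
  unfolding Aring_def vv_def by (intro CollectI exI[of _ 1] exI[of _ "[:0,1:]"]) simp

lemma vinvA_iff: "x \<in> vinvA \<longleftrightarrow> vv * x \<in> Aring"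
proof
  assume "x \<in> vinvA" then obtain a where "a \<in> Aring" "x = inverse vv * a" unfolding vinvA_def by blast
  then show "vv * x \<in> Aring" using vv_ne0 by (simp add: mult.assoc[symmetric])
next
  assume "vv * x \<in> Aring" then show "x \<in> vinvA" unfolding vinvA_def
    using vv_ne0 by (intro image_eqI[of _ _ "vv * x"]) (simp_all add: field_simps)
qed

lemma vinvA_sub: "x \<in> vinvA \<Longrightarrow> x \<in> Aring"
  using vinvA_iff A_mult[OF vinv_A] vv_ne0 by (metis mult.assoc mult_1 left_inverse)

lemma vinvA_zero: "0 \<in> vinvA" using vinvA_iff A_zero by simp
lemma vinvA_add: "x \<in> vinvA \<Longrightarrow> y \<in> vinvA \<Longrightarrow> x + y \<in> vinvA"
  using vinvA_iff A_add by (simp add: distrib_left)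
lemma vinvA_mult: "x \<in> vinvA \<Longrightarrow> a \<in> Aring \<Longrightarrow> x * a \<in> vinvA"
  using vinvA_iff A_mult by (metis mult.assoc)
lemma vinvA_diff: "x \<in> vinvA \<Longrightarrow> y \<in> vinvA \<Longrightarrow> x - y \<in> vinvA"
  using vinvA_iff A_diff by (simp add: right_diff_distrib)
lemma vinvA_scale: "a \<in> Aring \<Longrightarrow> inverse vv * a \<in> vinvA"
  unfolding vinvA_def by blast

lemma one_vinvA_mult: "x - 1 \<in> vinvA \<Longrightarrow> y - 1 \<in> vinvA \<Longrightarrow> x * y - 1 \<in> vinvA"
proof -
  assume a: "x - 1 \<in> vinvA" "y - 1 \<in> vinvA"
  have "x * y - 1 = (x - 1) * (y - 1) + (x - 1) + (y - 1)" by (simp add: algebra_simps)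
  thus ?thesis using a vinvA_mult vinvA_add vinvA_sub by metis
qed

lemma ci_vinvA:
  assumes "k > 0"
  shows "inverse (1 - inverse ((vv ^ k) ^ 2)) - 1 \<in> vinvA"
proof -
  let ?w = "vv ^ (2*k)"
  have w: "(vv ^ k) ^ 2 = ?w" by (simp add: power_mult[symmetric] mult.commute)
  have w1: "?w \<noteq> 1" using vv_pow_ne1 assms by simp
  have w0: "?w \<noteq> 0" using vv_ne0 by simp
  have "inverse (1 - inverse ?w) - 1 = inverse (?w - 1)"
    using w0 w1 by (simp add: field_simps)
  moreover have "vv * inverse (?w - 1) = Fract [:0,1:] (monom 1 (2*k) - 1)"
    unfolding vv_pow by (simp add: vv_def One_fract_def)
  ultimately have e: "vv * (inverse (1 - inverse ?w) - 1) = Fract [:0,1:] (monom 1 (2*k) - 1)"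
    by simp
  have ne: "monom (1::rat) (2*k) - 1 \<noteq> 0" using w1 by (metis eq_iff_diff_eq_0 vv_pow One_fract_def)
  have "degree (monom (1::rat) (2*k) - 1) = 2*k"
    using assms degree_add_eq_left[of "-1" "monom (1::rat) (2*k)"] by (simp add: degree_monom_eq)
  hence "degree [:0,1::rat:] \<le> degree (monom (1::rat) (2*k) - 1)" using assms by simp
  then have "Fract [:0,1:] (monom 1 (2*k) - 1) \<in> Aring" unfolding Aring_def using ne by blast
  thus ?thesis unfolding vinvA_iff w e .
qed



inductive Hw :: "('i \<Rightarrow> 'u::ring_1) \<Rightarrow> (Qv \<Rightarrow> 'u \<Rightarrow> 'u) \<Rightarrow> ('i \<Rightarrow> int) \<Rightarrow> 'u \<Rightarrow> bool"
  for E sc where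
  zero: "Hw E sc \<mu> 0"
| one: "Hw E sc (\<lambda>_. 0) 1"
| mulE: "Hw E sc \<mu> x \<Longrightarrow> Hw E sc (\<mu>(i := \<mu> i + 1)) (E i * x)"
| add: "Hw E sc \<mu> x \<Longrightarrow> Hw E sc \<mu> y \<Longrightarrow> Hw E sc \<mu> (x + y)"
| scale: "Hw E sc \<mu> x \<Longrightarrow> Hw E sc \<mu> (sc a x)"

lemma sb_add_l: "sym_bilin sc B \<Longrightarrow> B (x + y) z = B x z + B y z" unfolding sym_bilin_def by blast
lemma sb_sc_l: "sym_bilin sc B \<Longrightarrow> B (sc a x) z = a * B x z" unfolding sym_bilin_def by blast
lemma sb_sym: "sym_bilin sc B \<Longrightarrow> B x y = B y x" unfolding sym_bilin_def by blast
lemma sb_zero_l: "sym_bilin sc B \<Longrightarrow> B 0 z = 0"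
  using sb_add_l[of sc B 0 0 z] by simp
lemma sb_diff_l: "sym_bilin sc B \<Longrightarrow> B (x - y) z = B x z - B y z"
  using sb_add_l[of sc B "x - y" y z] by simp
lemma sb_zero_r: "sym_bilin sc B \<Longrightarrow> B z 0 = 0"
  using sb_zero_l sb_sym by metis
lemma sb_diff_r: "sym_bilin sc B \<Longrightarrow> B z (x - y) = B z x - B z y"
  using sb_diff_l sb_sym by metis

locale P84 =
  fixes cd :: "'i::finite \<Rightarrow> 'i \<Rightarrow> int"
    and E :: "'i \<Rightarrow> 'u::ring_1"
    and sc :: "Qv \<Rightarrow> 'u \<Rightarrow> 'u"
    and fp :: "'i \<Rightarrow> 'u \<Rightarrow> 'u"
    and K R :: "'u \<Rightarrow> 'u \<Rightarrow> Qv"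
  assumes cartan: "cartan_datum cd"
    and module: "module sc"
    and alg_l: "\<And>a x y. sc a (x * y) = sc a x * y"
    and alg_r: "\<And>a x y. sc a (x * y) = x * sc a y"
    and generated: "gen_by E sc = UNIV"
    and fp_lin: "\<And>i. module_hom sc sc (fp i)"
    and fp_1: "\<And>i. fp i 1 = 0"
    and fp_EP: "\<And>i j P. fp i (E j * P) =
                 sc (vi cd i powi aij cd i j) (E j * fp i P) + (if i = j then P else 0)"
    and K_bilin: "sym_bilin sc K"
    and K_11: "K 1 1 = 1"
    and K_E: "\<And>i x y. K (E i * x) y = K x (fp i y)"
    and K_L: "\<And>x y. x \<in> Linf cd E sc fp \<Longrightarrow> y \<in> Linf cd E sc fp \<Longrightarrow> K x y \<in> Aring"
    and R_bilin: "sym_bilin sc R"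
    and R_11: "R 1 1 = 1"
    and R_E: "\<And>i x y. R (E i * x) y = inverse (1 - inverse (vi cd i ^ 2)) * R x (fp i y)"
begin

sublocale M: module sc by (rule module)

lemma fp_add: "fp i (x + y) = fp i x + fp i y" using module_hom.add[OF fp_lin] .
lemma fp_sc: "fp i (sc a x) = sc a (fp i x)" using module_hom.scale[OF fp_lin] .
lemma fp_0: "fp i 0 = 0" using module_hom.zero[OF fp_lin] .
lemma fp_diff: "fp i (x - y) = fp i x - fp i y" using module_hom.diff[OF fp_lin] .
lemma fp_sum: "fp i (sum g S) = (\<Sum>a\<in>S. fp i (g a))" using module_hom.sum[OF fp_lin] .

lemma sc_minus: "sc (-1) x = - x"
  using M.scale_left_distrib[of 1 "-1" x] by (simp add: eq_neg_iff_add_eq_0)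

lemma R1: "R 1 y = K 1 y"
proof -
  have "y \<in> gen_by E sc" using generated by simp
  then show ?thesis
  proof induction
    case one then show ?case using R_11 K_11 by simp
  next
    case (mulE x i)
    have "R 1 (E i * x) = 0"
      using sb_sym[OF R_bilin, of 1] R_E[of i x 1] fp_1 sb_zero_r[OF R_bilin] by simp
    moreover have "K 1 (E i * x) = 0"
      using sb_sym[OF K_bilin, of 1] K_E[of i x 1] fp_1 sb_zero_r[OF K_bilin] by simp
    ultimately show ?case by simp
  next
    case (add x y) then show ?case
      using sb_sym[OF R_bilin, of 1] sb_sym[OF K_bilin, of 1] sb_add_l[OF R_bilin] sb_add_l[OF K_bilin] by metis
  next
    case (scale x a) then show ?case
      using sb_sym[OF R_bilin, of 1] sb_sym[OF K_bilin, of 1] sb_sc_l[OF R_bilin] sb_sc_l[OF K_bilin] by metis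
  qed
qed


lemma H_neg: "Hw E sc \<mu> x \<Longrightarrow> \<mu> j < 0 \<Longrightarrow> x = 0"
proof (induction rule: Hw.induct)
  case (mulE \<mu> x i) then show ?case by (cases "j = i") auto
qed auto

lemma H_sum: "(\<And>n. n < (M::nat) \<Longrightarrow> Hw E sc \<mu> (f n)) \<Longrightarrow> Hw E sc \<mu> (\<Sum>n<M. f n)"
  by (induction M) (auto intro: Hw.intros)

lemma H_diff: "Hw E sc \<mu> x \<Longrightarrow> Hw E sc \<mu> y \<Longrightarrow> Hw E sc \<mu> (x - y)"
  using Hw.add[of E sc \<mu> x "sc (-1) y"] Hw.scale[of E sc \<mu> y "-1"] sc_minus by simp

lemma H_eq: "Hw E sc \<mu> x \<Longrightarrow> \<mu> = \<nu> \<Longrightarrow> Hw E sc \<nu> x" by simp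

lemma H_fp: "Hw E sc \<mu> x \<Longrightarrow> Hw E sc (\<mu>(i := \<mu> i - 1)) (fp i x)"
proof (induction rule: Hw.induct)
  case (zero \<mu>) then show ?case by (simp add: fp_0 Hw.zero)
next
  case one then show ?case by (simp add: fp_1 Hw.zero)
next
  case (mulE \<mu> x j)
  have a: "Hw E sc ((\<mu>(i := \<mu> i - 1))(j := (\<mu>(i := \<mu> i - 1)) j + 1)) (E j * fp i x)"
    using Hw.mulE[OF mulE.IH] .
  show ?case
  proof (cases "i = j")
    case True
    have w: "(\<mu>(j := \<mu> j + 1))(i := (\<mu>(j := \<mu> j + 1)) i - 1) = \<mu>" using True by (simp add: fun_eq_iff)
    have "Hw E sc \<mu> (E j * fp i x)" using a True by (auto elim!: H_eq)
    then show ?thesis unfolding w using fp_EP[of i j x] True mulE.hyps by (auto intro: Hw.intros)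
  next
    case False
    have "Hw E sc ((\<mu>(j := \<mu> j + 1))(i := (\<mu>(j := \<mu> j + 1)) i - 1)) (E j * fp i x)"
      using a False by (auto elim!: H_eq)
    then show ?thesis unfolding fp_EP[of i j x] if_not_P[OF False] add_0_right by (rule Hw.scale)
  qed
next
  case (add \<mu> x y) then show ?case by (simp add: fp_add Hw.add)
next
  case (scale \<mu> x a) then show ?case by (simp add: fp_sc Hw.scale)
qed

lemma H_fp_pow: "Hw E sc \<mu> x \<Longrightarrow> Hw E sc (\<mu>(i := \<mu> i - int k)) ((fp i ^^ k) x)"
proof (induction k)
  case 0 then show ?case by simp
next
  case (Suc k)
  from H_fp[OF Suc.IH[OF Suc.prems], of i] show ?case by (auto elim!: H_eq)
qed

lemma H_nilp: "Hw E sc \<mu> x \<Longrightarrow> (fp i ^^ (nat (\<mu> i) + 1)) x = 0"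
  using H_fp_pow[of \<mu> x i "nat (\<mu> i) + 1"] H_neg[of "\<mu>(i := \<mu> i - int (nat (\<mu> i) + 1))" _ i] by simp

lemma H_Epow: "Hw E sc \<nu> x \<Longrightarrow> Hw E sc (\<nu>(i := \<nu> i + int k)) (E i ^ k * x)"
proof (induction k)
  case 0 then show ?case by simp
next
  case (Suc k)
  from Hw.mulE[OF Suc.IH[OF Suc.prems], of i] show ?case
    by (simp add: mult.assoc) (auto elim!: H_eq)
qed

lemma H_Ediv: "Hw E sc \<nu> x \<Longrightarrow> Hw E sc (\<nu>(i := \<nu> i + int k)) (Ediv cd E sc i k * x)"
  unfolding Ediv_def using alg_l[symmetric] Hw.scale[OF H_Epow] by metis

end


context P84 begin

definition wi where "wi i = vi cd i ^ 2"
definition ss where "ss i m = (\<Sum>k<m. wi i ^ k)"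
definition tt where "tt i n = inverse (qfact cd i (Suc n)) * ss i (Suc n) * qfact cd i n"

lemma p_pos: "0 < nat (cd i i div 2)"
proof -
  have "cd i i > 0" "even (cd i i)" using cartan unfolding cartan_datum_def by auto
  then show ?thesis by (auto elim!: evenE)
qed

lemma vi_pow: "vi cd i ^ m = vv ^ (nat (cd i i div 2) * m)"
  unfolding vi_def by (simp add: power_mult)

lemma vi_pow_ne1: "m > 0 \<Longrightarrow> vi cd i ^ m \<noteq> 1"
  unfolding vi_pow using p_pos[of i] vv_pow_ne1 by simp

lemma vi_ne0: "vi cd i \<noteq> 0" unfolding vi_def using vv_ne0 by simp

lemma aii: "aij cd i i = 2"
proof -
  have "cd i i \<noteq> 0" using cartan unfolding cartan_datum_def by (metis less_irrefl)
  then show ?thesis unfolding aij_def by simp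
qed

lemma fpEi: "fp i (E i * P) = sc (wi i) (E i * fp i P) + P"
  using fp_EP[of i i P] unfolding aii wi_def by simp

lemma ss_ne: "m > 0 \<Longrightarrow> ss i m \<noteq> 0"
proof
  assume m: "m > 0" and "ss i m = 0"
  then have "wi i ^ m - 1 = 0" using power_diff_1_eq[of "wi i" m] unfolding ss_def by simp
  moreover have "wi i ^ m \<noteq> 1" unfolding wi_def power_mult[symmetric] using vi_pow_ne1 m by simp
  ultimately show False by simp
qed

lemma sq_aux: "(x::Qv) \<noteq> 0 \<Longrightarrow> x = inverse x \<Longrightarrow> x * x = 1"
  by (metis right_inverse)

lemma qint_ne: "k > 0 \<Longrightarrow> qint cd i k \<noteq> 0"
proof -
  assume k: "k > 0"
  let ?a = "vi cd i"
  have ne: "?a ^ n - inverse ?a ^ n \<noteq> 0" if "n > 0" for n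
  proof
    assume "?a ^ n - inverse ?a ^ n = 0"
    then have "?a ^ n = inverse (?a ^ n)" by (simp add: power_inverse)
    then have "?a ^ n * ?a ^ n = 1" using sq_aux vi_ne0 by simp
    then have "?a ^ (2 * n) = 1" by (simp add: mult_2 power_add)
    then show False using vi_pow_ne1[of "2*n" i] that by simp
  qed
  show ?thesis unfolding qint_def using ne[OF k] ne[of 1] by simp
qed

lemma qfact_ne: "qfact cd i n \<noteq> 0"
  unfolding qfact_def using qint_ne by (simp add: prod_zero_iff)

lemma tt_ne: "tt i n \<noteq> 0"
  unfolding tt_def using qfact_ne ss_ne by simp

lemma qfact0: "qfact cd i 0 = 1" unfolding qfact_def by simp

lemma Ediv0: "Ediv cd E sc i 0 * d = d"
  unfolding Ediv_def qfact0 using alg_l[of 1 1 d] by simp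

lemma fp_pow: "fp i d = 0 \<Longrightarrow> fp i (E i ^ Suc m * d) = sc (ss i (Suc m)) (E i ^ m * d)"
proof (induction m)
  case 0 then show ?case using fpEi[of i d] by (simp add: fp_0 ss_def)
next
  case (Suc m)
  have "fp i (E i ^ Suc (Suc m) * d) = fp i (E i * (E i ^ Suc m * d))" by (simp add: mult.assoc)
  also have "\<dots> = sc (wi i) (E i * sc (ss i (Suc m)) (E i ^ m * d)) + E i ^ Suc m * d"
    using fpEi Suc by simp
  also have "\<dots> = sc (wi i * ss i (Suc m) + 1) (E i ^ Suc m * d)"
    by (simp add: alg_r[symmetric] M.scale_left_distrib mult.assoc)
  also have "wi i * ss i (Suc m) + 1 = ss i (Suc (Suc m))"
    unfolding ss_def by (simp add: sum.lessThan_Suc_shift sum_distrib_left power_Suc distrib_left del: sum.lessThan_Suc)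
  finally show ?case .
qed

lemma fp_Ediv: "fp i d = 0 \<Longrightarrow> fp i (Ediv cd E sc i (Suc n) * d) = sc (tt i n) (Ediv cd E sc i n * d)"
proof -
  assume d: "fp i d = 0"
  have "fp i (Ediv cd E sc i (Suc n) * d) = sc (inverse (qfact cd i (Suc n)) * ss i (Suc n)) (E i ^ n * d)"
    unfolding Ediv_def alg_l[symmetric] fp_sc fp_pow[OF d] by simp
  also have "\<dots> = sc (tt i n) (Ediv cd E sc i n * d)"
    unfolding Ediv_def alg_l[symmetric] tt_def using qfact_ne[of i n] by (simp add: mult.assoc)
  finally show ?thesis .
qed

end


context P84 begin

abbreviation Ed where "Ed i n \<equiv> Ediv cd E sc i n"

lemma sc_inv_tt: "sc (tt i n) x = 0 \<Longrightarrow> x = 0"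
proof -
  assume "sc (tt i n) x = 0"
  then have "sc (inverse (tt i n)) (sc (tt i n) x) = 0" by simp
  then show "x = 0" using tt_ne[of i n] by simp
qed

lemma fp_Ed_sum: "(\<forall>n<M. fp i (c n) = 0) \<Longrightarrow>
   fp i (\<Sum>n<M. Ed i (Suc n) * c n) = (\<Sum>n<M. Ed i n * sc (tt i n) (c n))"
  unfolding fp_sum by (intro sum.cong refl) (simp add: fp_Ediv alg_r[symmetric])

lemma decomp_unique: "(\<forall>n<M. fp i (c n) = 0) \<Longrightarrow> (\<Sum>n<M. Ed i n * c n) = 0 \<Longrightarrow> \<forall>n<M. c n = 0"
proof (induction M arbitrary: c)
  case 0 show ?case by simp
next
  case (Suc M)
  let ?c' = "\<lambda>n. sc (tt i n) (c (Suc n))"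
  have s: "(\<Sum>n<Suc M. Ed i n * c n) = c 0 + (\<Sum>n<M. Ed i (Suc n) * c (Suc n))"
    by (simp add: sum.lessThan_Suc_shift Ediv0 del: sum.lessThan_Suc)
  have c0: "fp i (c 0) = 0" using Suc.prems by simp
  have cs: "\<forall>n<M. fp i (c (Suc n)) = 0" using Suc.prems by simp
  have "fp i (\<Sum>n<Suc M. Ed i n * c n) = (\<Sum>n<M. Ed i n * ?c' n)"
    unfolding s fp_add c0 using fp_Ed_sum[OF cs] by simp
  then have f0: "(\<Sum>n<M. Ed i n * ?c' n) = 0" using Suc.prems fp_0 by simp
  have f1: "\<forall>n<M. fp i (?c' n) = 0" using cs by (simp add: fp_sc)
  have "\<forall>n<M. ?c' n = 0" using Suc.IH[of "\<lambda>n. sc (tt i n) (c (Suc n))", OF f1 f0] by simp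
  then have z: "\<forall>n<M. c (Suc n) = 0" using sc_inv_tt by blast
  then have "(\<Sum>n<M. Ed i (Suc n) * c (Suc n)) = 0" by simp
  then have "c 0 = 0" using Suc.prems s by simp
  then show ?case using z by (auto simp: less_Suc_eq_0_disj)
qed

lemma decomp_exists:
  "Hw E sc \<mu> u \<Longrightarrow> (fp i ^^ N) u = 0 \<Longrightarrow> \<exists>M c. (\<forall>n<M. fp i (c n) = 0 \<and> Hw E sc (\<mu>(i := \<mu> i - int n)) (c n))
      \<and> u = (\<Sum>n<M. Ed i n * c n)"
proof (induction N arbitrary: \<mu> u)
  case 0 then show ?case by (intro exI[of _ 0]) simp
next
  case (Suc N)
  let ?\<nu> = "\<mu>(i := \<mu> i - 1)"
  have h1: "Hw E sc ?\<nu> (fp i u)" using H_fp[OF Suc.prems(1)] .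
  have h2: "(fp i ^^ N) (fp i u) = 0" using Suc.prems(2) by (simp add: funpow_Suc_right del: funpow.simps)
  obtain M d where d: "\<forall>n<M. fp i (d n) = 0 \<and> Hw E sc (?\<nu>(i := ?\<nu> i - int n)) (d n)"
    and fu: "fp i u = (\<Sum>n<M. Ed i n * d n)" using Suc.IH[OF h1 h2] by (elim exE conjE)
  define c' where "c' n = sc (inverse (tt i n)) (d n)" for n
  define g where "g = (\<Sum>n<M. Ed i (Suc n) * c' n)"
  have c'k: "\<forall>n<M. fp i (c' n) = 0" using d by (simp add: c'_def fp_sc)
  have "fp i g = (\<Sum>n<M. Ed i n * d n)"
    unfolding g_def fp_Ed_sum[OF c'k] using tt_ne by (simp add: c'_def)
  then have fu0: "fp i (u - g) = 0" using fu by (simp add: fp_diff)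
  have c'w: "Hw E sc (\<mu>(i := \<mu> i - int (Suc n))) (c' n)" if "n < M" for n
  proof -
    have w: "?\<nu>(i := ?\<nu> i - int n) = \<mu>(i := \<mu> i - int (Suc n))" by (auto simp: fun_eq_iff)
    have "Hw E sc (?\<nu>(i := ?\<nu> i - int n)) (d n)" using d that by blast
    then have "Hw E sc (\<mu>(i := \<mu> i - int (Suc n))) (d n)" unfolding w .
    then show ?thesis unfolding c'_def by (rule Hw.scale)
  qed
  have "Hw E sc \<mu> (Ed i (Suc n) * c' n)" if "n < M" for n
  proof -
    have w: "(\<mu>(i := \<mu> i - int (Suc n)))(i := (\<mu>(i := \<mu> i - int (Suc n))) i + int (Suc n)) = \<mu>"
      by (simp add: fun_eq_iff)
    show ?thesis using H_Ediv[OF c'w[OF that], of i "Suc n"] unfolding w .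
  qed
  then have gw: "Hw E sc \<mu> g" unfolding g_def by (rule H_sum)
  define c where "c n = (if n = 0 then u - g else c' (n - 1))" for n
  show ?case
  proof (intro exI[of _ "Suc M"] exI[of _ c] conjI allI impI)
    fix n assume n: "n < Suc M"
    show "fp i (c n) = 0" using fu0 c'k n by (cases n) (auto simp: c_def)
    show "Hw E sc (\<mu>(i := \<mu> i - int n)) (c n)"
    proof (cases n)
      case 0 then show ?thesis using H_diff[OF Suc.prems(1) gw] by (simp add: c_def)
    next
      case (Suc m) then show ?thesis using c'w[of m] n by (simp add: c_def)
    qed
  next
    show "u = (\<Sum>n<Suc M. Ed i n * c n)"
      by (simp add: sum.lessThan_Suc_shift Ediv0 c_def g_def del: sum.lessThan_Suc)
  qed
qed

lemma pad_sum: "M \<le> (L::nat) \<Longrightarrow> (\<Sum>n<L. f n * (if n < M then c n else (0::'u))) = (\<Sum>n<M. f n * c n)"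
proof -
  assume "M \<le> L"
  have "(\<Sum>n<L. f n * (if n < M then c n else 0)) = (\<Sum>n<M. f n * (if n < M then c n else 0))"
  proof (rule sum.mono_neutral_right)
  qed (use \<open>M \<le> L\<close> in auto)
  then show ?thesis by simp
qed

lemma kashE_eq:
  assumes c: "\<forall>n<M. fp i (c n) = 0" and u: "u = (\<Sum>n<M. Ed i n * c n)"
  shows "kashE cd E sc fp i u = (\<Sum>n<M. Ed i (Suc n) * c n)"
  unfolding kashE_def
proof (rule the_equality)
  show "\<exists>N c'. (\<forall>n<N. fp i (c' n) = 0) \<and> u = (\<Sum>n<N. Ed i n * c' n) \<and>
      (\<Sum>n<M. Ed i (Suc n) * c n) = (\<Sum>n<N. Ed i (Suc n) * c' n)"
    by (rule exI[of _ M], rule exI[of _ c]) (simp add: c u)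
next
  fix w assume "\<exists>N c'. (\<forall>n<N. fp i (c' n) = 0) \<and> u = (\<Sum>n<N. Ed i n * c' n) \<and> w = (\<Sum>n<N. Ed i (Suc n) * c' n)"
  then obtain N c' where c': "\<forall>n<N. fp i (c' n) = 0" and u': "u = (\<Sum>n<N. Ed i n * c' n)"
    and w: "w = (\<Sum>n<N. Ed i (Suc n) * c' n)" by blast
  define L where "L = max M N"
  define cc where "cc n = (if n < M then c n else 0)" for n
  define cc' where "cc' n = (if n < N then c' n else 0)" for n
  have hML: "M \<le> L" and hNL: "N \<le> L" by (auto simp: L_def)
  have s1: "(\<Sum>n<L. Ed i n * cc n) = u" unfolding cc_def pad_sum[OF hML] u ..
  have s2: "(\<Sum>n<L. Ed i n * cc' n) = u" unfolding cc'_def pad_sum[OF hNL] u' ..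
  have h0: "(\<Sum>n<L. Ed i n * (cc n - cc' n)) = 0"
    using s1 s2 by (simp add: right_diff_distrib sum_subtractf)
  have h1: "\<forall>n<L. fp i (cc n - cc' n) = 0" using c c' by (simp add: cc_def cc'_def fp_diff fp_0)
  have "\<forall>n<L. cc n - cc' n = 0" by (rule decomp_unique[of L i "\<lambda>n. cc n - cc' n", OF h1 h0])
  then have e: "\<forall>n<L. cc n = cc' n" by simp
  have "w = (\<Sum>n<L. Ed i (Suc n) * cc' n)" unfolding cc'_def pad_sum[OF hNL] w ..
  also have "\<dots> = (\<Sum>n<L. Ed i (Suc n) * cc n)" using e by (intro sum.cong) auto
  also have "\<dots> = (\<Sum>n<M. Ed i (Suc n) * c n)" unfolding cc_def pad_sum[OF hML] ..
  finally show "w = (\<Sum>n<M. Ed i (Suc n) * c n)" .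
qed

lemma H_kashE: "Hw E sc \<mu> u \<Longrightarrow> Hw E sc (\<mu>(i := \<mu> i + 1)) (kashE cd E sc fp i u)"
proof -
  assume u: "Hw E sc \<mu> u"
  obtain M c where c: "\<forall>n<M. fp i (c n) = 0 \<and> Hw E sc (\<mu>(i := \<mu> i - int n)) (c n)"
    and ue: "u = (\<Sum>n<M. Ed i n * c n)" using decomp_exists[OF u H_nilp[OF u]] by blast
  have "kashE cd E sc fp i u = (\<Sum>n<M. Ed i (Suc n) * c n)" using c ue by (intro kashE_eq) auto
  moreover have "Hw E sc (\<mu>(i := \<mu> i + 1)) (\<Sum>n<M. Ed i (Suc n) * c n)"
  proof (rule H_sum)
    fix n assume "n < M"
    show "Hw E sc (\<mu>(i := \<mu> i + 1)) (Ed i (Suc n) * c n)"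
    proof -
      have w: "(\<mu>(i := \<mu> i - int n))(i := (\<mu>(i := \<mu> i - int n)) i + int (Suc n)) = \<mu>(i := \<mu> i + 1)"
        by (auto simp: fun_eq_iff)
      have "Hw E sc (\<mu>(i := \<mu> i - int n)) (c n)" using c \<open>n < M\<close> by blast
      from H_Ediv[OF this, of i "Suc n"] show ?thesis unfolding w .
    qed
  qed
  ultimately show ?thesis by simp
qed

lemma kmon_H: "m \<in> kmon cd E sc fp \<Longrightarrow> \<exists>\<mu>. (\<forall>j. \<mu> j \<ge> 0) \<and> Hw E sc \<mu> m"
proof (induction rule: kmon.induct)
  case one show ?case by (rule exI[of _ "\<lambda>_. 0"]) (simp add: Hw.one)
next
  case (step m i)
  then obtain \<mu> where m1: "\<forall>j. \<mu> j \<ge> 0" and m2: "Hw E sc \<mu> m" by blast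
  have "Hw E sc (\<mu>(i := \<mu> i + 1)) (kashE cd E sc fp i m)" by (rule H_kashE[OF m2])
  moreover have "\<forall>j. (\<mu>(i := \<mu> i + 1)) j \<ge> 0" using m1 by simp
  ultimately show ?case by blast
qed

end


context P84 begin

definition ci where "ci j = inverse (1 - inverse (vi cd j ^ 2))"
definition cfac where "cfac \<mu> = (\<Prod>j\<in>UNIV. ci j ^ nat (\<mu> j))"

lemma cfac0: "cfac (\<lambda>_. 0) = 1" unfolding cfac_def by simp

lemma cfac_step: "\<mu> i \<ge> 0 \<Longrightarrow> cfac (\<mu>(i := \<mu> i + 1)) = ci i * cfac \<mu>"
proof -
  assume h: "\<mu> i \<ge> 0"
  have a: "cfac \<nu> = ci i ^ nat (\<nu> i) * (\<Prod>j\<in>UNIV - {i}. ci j ^ nat (\<nu> j))" for \<nu>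
    unfolding cfac_def by (rule prod.remove) auto
  have b: "(\<Prod>j\<in>UNIV - {i}. ci j ^ nat ((\<mu>(i := \<mu> i + 1)) j)) = (\<Prod>j\<in>UNIV - {i}. ci j ^ nat (\<mu> j))"
    by (intro prod.cong) auto
  have c: "nat (\<mu> i + 1) = Suc (nat (\<mu> i))" using h by simp
  show ?thesis unfolding a[of "\<mu>(i := \<mu> i + 1)"] a[of \<mu>] b by (simp add: c)
qed

lemma H_RK: "Hw E sc \<mu> x \<Longrightarrow> R x y = cfac \<mu> * K x y"
proof (induction arbitrary: y rule: Hw.induct)
  case (zero \<mu>) then show ?case using sb_zero_l[OF R_bilin] sb_zero_l[OF K_bilin] by simp
next
  case one then show ?case using R1 cfac0 by simp
next
  case (mulE \<mu> x i)
  show ?case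
  proof (cases "\<mu> i \<ge> 0")
    case True
    have "R (E i * x) y = ci i * (cfac \<mu> * K x (fp i y))" using R_E mulE.IH unfolding ci_def by simp
    also have "\<dots> = cfac (\<mu>(i := \<mu> i + 1)) * K (E i * x) y" using K_E cfac_step[of \<mu> i, OF True] by simp
    finally show ?thesis .
  next
    case False
    then have "x = 0" using H_neg[OF mulE.hyps, of i] by simp
    then show ?thesis using sb_zero_l[OF R_bilin] sb_zero_l[OF K_bilin] by simp
  qed
next
  case (add \<mu> x y') then show ?case using sb_add_l[OF R_bilin] sb_add_l[OF K_bilin] by (simp add: distrib_left)
next
  case (scale \<mu> x a) then show ?case using sb_sc_l[OF R_bilin] sb_sc_l[OF K_bilin] by simp
qed

lemma ci_vinv: "ci j - 1 \<in> vinvA"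
  unfolding ci_def vi_def using ci_vinvA[OF p_pos[of j]] .

lemma pow_vinv: "x - 1 \<in> vinvA \<Longrightarrow> x ^ n - 1 \<in> vinvA"
  by (induction n) (auto simp: vinvA_zero intro: one_vinvA_mult)

lemma prod_vinv: "finite S \<Longrightarrow> (\<forall>j\<in>S. f j - 1 \<in> vinvA) \<Longrightarrow> prod f S - 1 \<in> vinvA"
  by (induction S rule: finite_induct) (auto simp: vinvA_zero intro: one_vinvA_mult)

lemma cfac_vinv: "cfac \<mu> - 1 \<in> vinvA"
  unfolding cfac_def using prod_vinv[of UNIV "\<lambda>j. ci j ^ nat (\<mu> j)"] pow_vinv[OF ci_vinv] by simp

lemma Linf_RK: "x \<in> Linf cd E sc fp \<Longrightarrow> y \<in> Linf cd E sc fp \<Longrightarrow> R x y - K x y \<in> vinvA"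
proof (induction rule: Linf.induct)
  case zero then show ?case using sb_zero_l[OF R_bilin] sb_zero_l[OF K_bilin] vinvA_zero by simp
next
  case (add x1 x2)
  have "R (x1 + x2) y - K (x1 + x2) y = (R x1 y - K x1 y) + (R x2 y - K x2 y)"
    using sb_add_l[OF R_bilin] sb_add_l[OF K_bilin] by simp
  then show ?case using add vinvA_add by simp
next
  case (smul a m)
  obtain \<mu> where "Hw E sc \<mu> m" using kmon_H[OF smul.hyps(2)] by blast
  then have rk: "R m y = cfac \<mu> * K m y" by (rule H_RK)
  have "m \<in> Linf cd E sc fp" using Linf.smul[OF A_one smul.hyps(2)] by simp
  then have "K m y \<in> Aring" using K_L smul.prems by blast
  then have "a * K m y \<in> Aring" using A_mult smul.hyps(1) by blast
  then have "(cfac \<mu> - 1) * (a * K m y) \<in> vinvA" using vinvA_mult cfac_vinv by blast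
  moreover have "R (sc a m) y - K (sc a m) y = (cfac \<mu> - 1) * (a * K m y)"
    using sb_sc_l[OF R_bilin] sb_sc_l[OF K_bilin] rk by (simp add: algebra_simps)
  ultimately show ?case by simp
qed

lemma Linf_R_A: "x \<in> Linf cd E sc fp \<Longrightarrow> y \<in> Linf cd E sc fp \<Longrightarrow> R x y \<in> Aring"
proof -
  assume "x \<in> Linf cd E sc fp" "y \<in> Linf cd E sc fp"
  then have "R x y - K x y \<in> Aring" "K x y \<in> Aring" using Linf_RK vinvA_sub K_L by blast+
  then show ?thesis using A_add by fastforce
qed

lemma main:
  "(\<forall>x\<in>Linf cd E sc fp. \<forall>y\<in>Linf cd E sc fp. R x y \<in> Aring)
       \<and> (\<forall>x\<in>Linf cd E sc fp. \<forall>x'\<in>Linf cd E sc fp. \<forall>y\<in>Linf cd E sc fp. \<forall>y'\<in>Linf cd E sc fp.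
            x - x' \<in> vinvL cd E sc fp \<longrightarrow> y - y' \<in> vinvL cd E sc fp \<longrightarrow> R x y - R x' y' \<in> vinvA)
       \<and> (\<forall>x\<in>Linf cd E sc fp. \<forall>y\<in>Linf cd E sc fp. R x y - K x y \<in> vinvA)"
proof (intro conjI ballI impI)
  fix x y assume "x \<in> Linf cd E sc fp" "y \<in> Linf cd E sc fp"
  then show "R x y \<in> Aring" by (rule Linf_R_A)
next
  fix x y assume "x \<in> Linf cd E sc fp" "y \<in> Linf cd E sc fp"
  then show "R x y - K x y \<in> vinvA" by (rule Linf_RK)
next
  fix x x' y y' assume x: "x \<in> Linf cd E sc fp" and x': "x' \<in> Linf cd E sc fp"
    and y: "y \<in> Linf cd E sc fp" and y': "y' \<in> Linf cd E sc fp"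
    and dx: "x - x' \<in> vinvL cd E sc fp" and dy: "y - y' \<in> vinvL cd E sc fp"
  obtain z where z: "z \<in> Linf cd E sc fp" "x - x' = sc (inverse vv) z" using dx unfolding vinvL_def by blast
  obtain z' where z': "z' \<in> Linf cd E sc fp" "y - y' = sc (inverse vv) z'" using dy unfolding vinvL_def by blast
  have "R x y - R x' y' = R (x - x') y + R x' (y - y')"
    using sb_diff_l[OF R_bilin, of x x' y] sb_diff_r[OF R_bilin, of x' y y'] by simp
  also have "\<dots> = inverse vv * R z y + inverse vv * R z' x'"
    unfolding z(2) z'(2) using sb_sc_l[OF R_bilin] sb_sym[OF R_bilin, of x'] by simp
  finally have e: "R x y - R x' y' = inverse vv * R z y + inverse vv * R z' x'" .
  have "inverse vv * R z y \<in> vinvA" using Linf_R_A[OF z(1) y] by (rule vinvA_scale)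
  moreover have "inverse vv * R z' x' \<in> vinvA" using Linf_R_A[OF z'(1) x'] by (rule vinvA_scale)
  ultimately show "R x y - R x' y' \<in> vinvA" unfolding e by (rule vinvA_add)
qed

end

theorem proposition8p4:
  fixes cd :: "'i::finite \<Rightarrow> 'i \<Rightarrow> int"
    and E :: "'i \<Rightarrow> 'u::ring_1"
    and sc :: "Qv \<Rightarrow> 'u \<Rightarrow> 'u"
    and fp :: "'i \<Rightarrow> 'u \<Rightarrow> 'u"
    and K R :: "'u \<Rightarrow> 'u \<Rightarrow> Qv"
  assumes cartan: "cartan_datum cd"
    and module: "module sc"
    and alg_l: "\<And>a x y. sc a (x * y) = sc a x * y"
    and alg_r: "\<And>a x y. sc a (x * y) = x * sc a y"
    and generated: "gen_by E sc = UNIV"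
    and fp_lin: "\<And>i. module_hom sc sc (fp i)"
    and fp_1: "\<And>i. fp i 1 = 0"
    and fp_E: "\<And>i j. fp i (E j) = (if i = j then 1 else 0)"
    and fp_EP: "\<And>i j P. fp i (E j * P) =
                 sc (vi cd i powi aij cd i j) (E j * fp i P) + (if i = j then P else 0)"
    and K_bilin: "sym_bilin sc K"
    and K_nondeg: "\<And>x. (\<forall>y. K x y = 0) \<Longrightarrow> x = 0"
    and K_11: "K 1 1 = 1"
    and K_E: "\<And>i x y. K (E i * x) y = K x (fp i y)"
    and K_L: "\<And>x y. x \<in> Linf cd E sc fp \<Longrightarrow> y \<in> Linf cd E sc fp \<Longrightarrow> K x y \<in> Aring"
    and R_bilin: "sym_bilin sc R"
    and R_11: "R 1 1 = 1"
    and R_E: "\<And>i x y. R (E i * x) y = inverse (1 - inverse (vi cd i ^ 2)) * R x (fp i y)"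
  shows "(\<forall>x\<in>Linf cd E sc fp. \<forall>y\<in>Linf cd E sc fp. R x y \<in> Aring)
       \<and> (\<forall>x\<in>Linf cd E sc fp. \<forall>x'\<in>Linf cd E sc fp. \<forall>y\<in>Linf cd E sc fp. \<forall>y'\<in>Linf cd E sc fp.
            x - x' \<in> vinvL cd E sc fp \<longrightarrow> y - y' \<in> vinvL cd E sc fp \<longrightarrow> R x y - R x' y' \<in> vinvA)
       \<and> (\<forall>x\<in>Linf cd E sc fp. \<forall>y\<in>Linf cd E sc fp. R x y - K x y \<in> vinvA)"
  proof -
  interpret P84 cd E sc fp K R
    by (rule P84.intro) (insert cartan module alg_l alg_r generated fp_lin fp_1 fp_EP K_bilin K_11 K_E K_L R_bilin R_11 R_E, blast)+
  show ?thesis by (rule main)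
qed

end
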